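(* Let $T:\mathcal{M}_2\to\mathcal{M}_2$ be a random Pauli channel $T(\rho)=p_1\sigma_1\rho\sigma_1+p_2\sigma_2\rho\sigma_2+p_3\sigma_3\rho\sigma_3+(1-p_1-p_2-p_3)\rho$ and $\mathcal{L}=T-\text{id}_2$. Then $$\alpha_2(\mathcal{L})=2\min\{p_1+p_2,\,p_2+p_3,\,p_3+p_1\}.$$
   Context: $(p_1,p_2,p_3,1-p_1-p_2-p_3)$ is a probability distribution and $\sigma_1,\sigma_2,\sigma_3$ are the Pauli matrices. $\alpha_2(\mathcal{L})=\inf_{X>0}\mathcal{E}^2_{\mathcal{L}}(X)/\text{Ent}_2(X)$ over positive definite $X\in\mathcal{M}_2$, with $\mathcal{E}^2_{\mathcal{L}}(X)=-\frac12\text{tr}[\mathcal{L}(X)X]$ and $\text{Ent}_2(X)=\frac14\text{tr}[X^2(\log\frac{X^2}{\text{tr}(X^2)}+\log2)]$. *)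

theory Defs
  imports "HOL-Analysis.Analysis" "Jordan_Normal_Form.Schur_Decomposition"
begin

definition mtrace :: "complex mat \<Rightarrow> complex" where
  "mtrace A = (\<Sum>i<dim_row A. A $$ (i, i))"

definition unitary_mat :: "nat \<Rightarrow> complex mat \<Rightarrow> bool" where
  "unitary_mat n U \<longleftrightarrow> U \<in> carrier_mat n n \<and> mat_adjoint U * U = 1\<^sub>m n"

definition hermitian_mat :: "nat \<Rightarrow> complex mat \<Rightarrow> bool" where
  "hermitian_mat n A \<longleftrightarrow> A \<in> carrier_mat n n \<and> mat_adjoint A = A"

definition posdef_mat :: "nat \<Rightarrow> complex mat \<Rightarrow> bool" where
  "posdef_mat n X \<longleftrightarrow> hermitian_mat n X \<and>
     (\<forall>v \<in> carrier_vec n. v \<noteq> 0\<^sub>v n \<longrightarrow> Re (conjugate v \<bullet> (X *\<^sub>v v)) > 0)"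

definition herm_fun :: "nat \<Rightarrow> (real \<Rightarrow> real) \<Rightarrow> complex mat \<Rightarrow> complex mat" where
  "herm_fun n f A = (SOME B. \<exists>U d. unitary_mat n U \<and>
       A = U * mat_diag n (\<lambda>i. complex_of_real (d i)) * mat_adjoint U \<and>
       B = U * mat_diag n (\<lambda>i. complex_of_real (f (d i))) * mat_adjoint U)"

definition mat_log :: "nat \<Rightarrow> complex mat \<Rightarrow> complex mat" where
  "mat_log n A = herm_fun n ln A"

definition sigma1 :: "complex mat" where
  "sigma1 = mat_of_rows_list 2 [[0, 1], [1, 0]]"

definition sigma2 :: "complex mat" where
  "sigma2 = mat_of_rows_list 2 [[0, -\<i>], [\<i>, 0]]"

definition sigma3 :: "complex mat" where
  "sigma3 = mat_of_rows_list 2 [[1, 0], [0, -1]]"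

definition pauli_channel :: "real \<Rightarrow> real \<Rightarrow> real \<Rightarrow> complex mat \<Rightarrow> complex mat" where
  "pauli_channel p1 p2 p3 \<rho> =
      complex_of_real p1 \<cdot>\<^sub>m (sigma1 * \<rho> * sigma1)
    + complex_of_real p2 \<cdot>\<^sub>m (sigma2 * \<rho> * sigma2)
    + complex_of_real p3 \<cdot>\<^sub>m (sigma3 * \<rho> * sigma3)
    + complex_of_real (1 - p1 - p2 - p3) \<cdot>\<^sub>m \<rho>"

definition pauli_generator :: "real \<Rightarrow> real \<Rightarrow> real \<Rightarrow> complex mat \<Rightarrow> complex mat" where
  "pauli_generator p1 p2 p3 X = pauli_channel p1 p2 p3 X - X"

definition dirichlet2 :: "(complex mat \<Rightarrow> complex mat) \<Rightarrow> complex mat \<Rightarrow> real" where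
  "dirichlet2 L X = - (1/2) * Re (mtrace (L X * X))"

definition ent2 :: "complex mat \<Rightarrow> real" where
  "ent2 X = (1/4) * Re (mtrace (X * X *
      (mat_log 2 ((1 / mtrace (X * X)) \<cdot>\<^sub>m (X * X)) + complex_of_real (ln 2) \<cdot>\<^sub>m 1\<^sub>m 2)))"

text \<open>alpha_2(L): infimum of the ratio over positive definite 2x2 X.  Matrices with
  Ent_2(X) = 0 (the scalar multiples of the identity, where the ratio is 0/0) are excluded.\<close>
definition alpha2 :: "(complex mat \<Rightarrow> complex mat) \<Rightarrow> real" where
  "alpha2 L = Inf {dirichlet2 L X / ent2 X | X. posdef_mat 2 X \<and> ent2 X \<noteq> 0}"

end

theory Submission
  imports Defs "HOL-Real_Asymp.Real_Asymp"
begin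

definition mat2 :: "complex \<Rightarrow> complex \<Rightarrow> complex \<Rightarrow> complex \<Rightarrow> complex mat" where
  "mat2 a b c d = Matrix.mat 2 2 (\<lambda>(i,j). if i = 0 then (if j = 0 then a else b) else (if j = 0 then c else d))"

lemma mat2_carrier[simp]: "mat2 a b c d \<in> carrier_mat 2 2"
  and mat2_dim[simp]: "dim_row (mat2 a b c d) = 2" "dim_col (mat2 a b c d) = 2"
  by (auto simp: mat2_def)

lemma mat2_idx[simp]: "mat2 a b c d $$ (0,0) = a" "mat2 a b c d $$ (0,1) = b"
  "mat2 a b c d $$ (1,0) = c" "mat2 a b c d $$ (1,1) = d"
  by (auto simp: mat2_def)

lemma less2: "(i::nat) < 2 \<longleftrightarrow> i = 0 \<or> i = 1" by auto

lemma mat2_eta: assumes "A \<in> carrier_mat 2 2"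
  shows "A = mat2 (A $$ (0,0)) (A $$ (0,1)) (A $$ (1,0)) (A $$ (1,1))"
  by (rule eq_matI) (use assms in \<open>auto simp: mat2_def less2\<close>)

lemma mat2_eq_iff: "mat2 a b c d = mat2 a' b' c' d' \<longleftrightarrow> a = a' \<and> b = b' \<and> c = c' \<and> d = d'"
  by (metis mat2_idx)

lemma sum2: "(\<Sum>i\<in>{0..<2::nat}. f i) = f 0 + f 1" by (simp add: numeral_2_eq_2)
lemma sum2': "(\<Sum>i<2::nat. f i) = f 0 + f 1" by (simp add: numeral_2_eq_2)

lemma mat2_mult[simp]: "mat2 a b c d * mat2 e f g h = mat2 (a*e+b*g) (a*f+b*h) (c*e+d*g) (c*f+d*h)"
  by (rule eq_matI) (auto simp: mat2_def less2 scalar_prod_def sum2)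

lemma mat2_add[simp]: "mat2 a b c d + mat2 e f g h = mat2 (a+e) (b+f) (c+g) (d+h)"
  by (rule eq_matI) (auto simp: mat2_def less2)

lemma mat2_minus[simp]: "mat2 a b c d - mat2 e f g h = mat2 (a-e) (b-f) (c-g) (d-h)"
  by (rule eq_matI) (auto simp: mat2_def less2)

lemma mat2_smult[simp]: "k \<cdot>\<^sub>m mat2 a b c d = mat2 (k*a) (k*b) (k*c) (k*d)"
  by (rule eq_matI) (auto simp: mat2_def less2)

lemma mat2_one: "1\<^sub>m 2 = mat2 1 0 0 1"
  by (rule eq_matI) (auto simp: mat2_def less2)

lemma mat2_diag: "mat_diag 2 f = mat2 (f 0) 0 0 (f 1)"
  by (rule eq_matI) (auto simp: mat2_def mat_diag_def less2)

lemma mat2_adjoint[simp]: "mat_adjoint (mat2 a b c d) = mat2 (cnj a) (cnj c) (cnj b) (cnj d)"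
  by (rule eq_matI) (auto simp: mat2_def mat_adjoint_def less2 mat_of_rows_def)

lemma mat2_trace[simp]: "mtrace (mat2 a b c d) = a + d"
  by (simp add: mtrace_def sum2' mat2_def)

lemma sigmas: "sigma1 = mat2 0 1 1 0" "sigma2 = mat2 0 (-\<i>) \<i> 0" "sigma3 = mat2 1 0 0 (-1)"
  by (rule eq_matI; auto simp: mat2_def sigma1_def sigma2_def sigma3_def mat_of_rows_list_def less2)+

definition Xof :: "real \<Rightarrow> real \<Rightarrow> real \<Rightarrow> real \<Rightarrow> complex mat" where
  "Xof a x y z = mat2 (of_real (a+z)) (of_real x - \<i> * of_real y) (of_real x + \<i> * of_real y) (of_real (a-z))"

lemma dirichlet_Xof: "dirichlet2 (pauli_generator p1 p2 p3) (Xof a x y z) =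
   2*((p2+p3)*x^2 + (p1+p3)*y^2 + (p1+p2)*z^2)"
  unfolding dirichlet2_def pauli_generator_def pauli_channel_def sigmas Xof_def
  by (simp add: algebra_simps power2_eq_square)

lemma tr_cyc: assumes "A \<in> carrier_mat 2 2" "B \<in> carrier_mat 2 2"
  shows "mtrace (A*B) = mtrace (B*A)"
  by (subst (1 2) mat2_eta[OF assms(1)], subst (1 2) mat2_eta[OF assms(2)]) (simp add: algebra_simps)

lemma adj_carrier: "U \<in> carrier_mat 2 2 \<Longrightarrow> mat_adjoint U \<in> carrier_mat 2 2"
  unfolding mat_adjoint_def by (auto simp: mat_of_rows_def)

lemma unit_conj: assumes U: "U \<in> carrier_mat 2 2" and V: "V \<in> carrier_mat 2 2"
  and VU: "V * U = 1\<^sub>m 2" and M: "M \<in> carrier_mat 2 2"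
  shows "mtrace (U*(M*V)) = mtrace M"
proof -
  have "mtrace (U*(M*V)) = mtrace ((M*V)*U)" using U V M by (intro tr_cyc) auto
  also have "\<dots> = mtrace (M*(V*U))" using U V M by simp
  also have "\<dots> = mtrace M" using VU M by simp
  finally show ?thesis .
qed

lemma spec_traces:
  assumes U: "unitary_mat 2 U"
  and A: "A = U * mat_diag 2 (\<lambda>i. complex_of_real (d i)) * mat_adjoint U"
  and B: "B = U * mat_diag 2 (\<lambda>i. complex_of_real (f (d i))) * mat_adjoint U"
  shows "mtrace (A*B) = of_real (d 0 * f (d 0) + d 1 * f (d 1))"
    "mtrace A = of_real (d 0 + d 1)" "mtrace (A*A) = of_real (d 0 ^ 2 + d 1 ^ 2)"
proof -
  define V where "V = mat_adjoint U"
  have Uc: "U \<in> carrier_mat 2 2" and VU: "V * U = 1\<^sub>m 2" using U unfolding unitary_mat_def V_def by auto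
  have Vc: "V \<in> carrier_mat 2 2" unfolding V_def by (rule adj_carrier[OF Uc])
  have VUX: "V * (U * X) = X" if "X \<in> carrier_mat 2 n" for X n
  proof -
    have "V * (U * X) = (V*U)*X" using Uc Vc that by simp
    thus ?thesis using VU that by simp
  qed
  define D where "D = mat_diag 2 (\<lambda>i. complex_of_real (d i))"
  define F where "F = mat_diag 2 (\<lambda>i. complex_of_real (f (d i)))"
  have Dc: "D \<in> carrier_mat 2 2" "F \<in> carrier_mat 2 2" unfolding D_def F_def by auto
  have DVc: "D * V \<in> carrier_mat 2 2" "F * V \<in> carrier_mat 2 2" "U * (F * V) \<in> carrier_mat 2 2"
    "U * (D * V) \<in> carrier_mat 2 2" using Uc Vc Dc by auto
  have A': "A = U * (D * V)"
    unfolding A D_def[symmetric] V_def[symmetric] using Uc Vc Dc by simp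
  have B': "B = U * (F * V)"
    unfolding B F_def[symmetric] V_def[symmetric] using Uc Vc Dc by simp
  have gen: "(U * (D * V)) * (U * (G * V)) = U * ((D * G) * V)" if G: "G \<in> carrier_mat 2 2" for G
  proof -
    have "(U * (D * V)) * (U * (G * V)) = U * ((D * V) * (U * (G * V)))"
      by (rule assoc_mult_mat[of U 2 2 _ 2 _ 2]) (use Uc DVc G Vc in auto)
    also have "(D * V) * (U * (G * V)) = D * (V * (U * (G * V)))"
      by (rule assoc_mult_mat[of D 2 2 _ 2 _ 2]) (use Uc Dc G Vc in auto)
    also have "V * (U * (G * V)) = G * V" using G Vc by (intro VUX) auto
    also have "D * (G * V) = (D * G) * V" using G Vc Dc by simp
    finally show ?thesis .
  qed
  have AB: "A * B = U * ((D * F) * V)" unfolding A' B' using gen Dc by auto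
  have AA: "A * A = U * ((D * D) * V)" unfolding A' using gen Dc by auto
  have DF: "D * F \<in> carrier_mat 2 2" "D * D \<in> carrier_mat 2 2" using Dc by auto
  show "mtrace (A*B) = of_real (d 0 * f (d 0) + d 1 * f (d 1))"
    unfolding AB unit_conj[OF Uc Vc VU DF(1)] by (simp add: D_def F_def mat2_diag)
  show "mtrace (A*A) = of_real (d 0 ^ 2 + d 1 ^ 2)"
    unfolding AA unit_conj[OF Uc Vc VU DF(2)] by (simp add: D_def mat2_diag power2_eq_square)
  show "mtrace A = of_real (d 0 + d 1)"
    unfolding A' unit_conj[OF Uc Vc VU Dc(1)] by (simp add: D_def mat2_diag)
qed

lemma herm_form: assumes "hermitian_mat 2 A"
  shows "A = mat2 (of_real (Re (A$$(0,0)))) (cnj (A$$(1,0))) (A$$(1,0)) (of_real (Re (A$$(1,1))))"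
proof -
  have c: "A \<in> carrier_mat 2 2" and h: "mat_adjoint A = A" using assms unfolding hermitian_mat_def by auto
  have AM: "mat2 (A $$ (0,0)) (A $$ (0,1)) (A $$ (1,0)) (A $$ (1,1)) = A"
    by (rule mat2_eta[OF c, symmetric])
  have "mat_adjoint (mat2 (A $$ (0,0)) (A $$ (0,1)) (A $$ (1,0)) (A $$ (1,1)))
     = mat2 (A $$ (0,0)) (A $$ (0,1)) (A $$ (1,0)) (A $$ (1,1))"
    using h by (simp only: AM)
  hence e: "cnj (A$$(0,0)) = A$$(0,0)" "cnj (A$$(1,0)) = A$$(0,1)" "cnj (A$$(1,1)) = A$$(1,1)"
    unfolding mat2_adjoint mat2_eq_iff by auto
  have r: "of_real (Re (A$$(0,0))) = A$$(0,0)" "of_real (Re (A$$(1,1))) = A$$(1,1)"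
  proof -
    have "Im (A$$(0,0)) = 0" "Im (A$$(1,1)) = 0" using arg_cong[OF e(1), of Im] arg_cong[OF e(3), of Im] by simp_all
    thus "of_real (Re (A$$(0,0))) = A$$(0,0)" "of_real (Re (A$$(1,1))) = A$$(1,1)" by (simp_all add: complex_eq_iff)
  qed
  show ?thesis unfolding r e(2) by (rule mat2_eta[OF c])
qed

lemma herm_diag_exists: assumes "hermitian_mat 2 A"
  shows "\<exists>U d. unitary_mat 2 U \<and> A = U * mat_diag 2 (\<lambda>i. complex_of_real (d i)) * mat_adjoint U"
proof -
  define \<alpha> where "\<alpha> = Re (A$$(0,0))"
  define \<delta> where "\<delta> = Re (A$$(1,1))"
  define \<beta> where "\<beta> = A$$(1,0)"
  have AF: "A = mat2 (of_real \<alpha>) (cnj \<beta>) \<beta> (of_real \<delta>)"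
    unfolding \<alpha>_def \<beta>_def \<delta>_def by (rule herm_form[OF assms])
  show ?thesis
  proof (cases "\<beta> = 0")
    case True
    define d where "d = (\<lambda>i::nat. if i = 0 then \<alpha> else \<delta>)"
    have "unitary_mat 2 (mat2 1 0 0 1)" unfolding unitary_mat_def by (simp add: mat2_one)
    moreover have "A = mat2 1 0 0 1 * mat_diag 2 (\<lambda>i. complex_of_real (d i)) * mat_adjoint (mat2 1 0 0 1)"
      unfolding AF True by (simp add: mat2_diag d_def)
    ultimately show ?thesis by blast
  next
    case False
    define h where "h = (\<alpha> - \<delta>)/2"
    define m where "m = (\<alpha> + \<delta>)/2"
    define nb where "nb = (cmod \<beta>)^2"
    define w where "w = sqrt (h^2 + nb)"
    have nbpos: "nb > 0" unfolding nb_def using False by simp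
    have s2: "w^2 = h^2 + nb" unfolding w_def using nbpos by (simp add: add_nonneg_pos)
    have spos: "w > 0" unfolding w_def using nbpos by (simp add: add_nonneg_pos)
    have "h^2 < w^2" using s2 nbpos by simp
    hence habs: "\<bar>h\<bar> < w" using spos by (metis abs_of_pos power2_abs power_less_imp_less_base less_le_not_le)
    have sh1: "w + h > 0" "w - h > 0" using habs by auto
    define cv where "cv = sqrt ((w+h) / (2* w))"
    have cv2: "cv^2 = (w+h) / (2* w)" unfolding cv_def using sh1 spos by simp
    have cpos: "cv > 0" unfolding cv_def using sh1 spos by simp
    define k where "k = 1/(2* w*cv)"
    have nbk: "nb * k^2 = (w-h) / (2* w)"
    proof -
      have "nb * k^2 = (w^2 - h^2) / (4* w^2*cv^2)" unfolding k_def using s2 by (simp add: power_divide power_mult_distrib)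
      also have "\<dots> = ((w-h)*(w+h)) / ((2* w)*(w+h))"
      proof -
        have e: "cv^2*(2*w) = w+h" using cv2 spos by (simp add: field_simps)
        have "4*w^2*cv^2 = (2*w)*(cv^2*(2*w))" by (simp add: power2_eq_square algebra_simps)
        hence den: "4*w^2*cv^2 = (2*w)*(w+h)" using e by simp
        have num: "w^2-h^2 = (w-h)*(w+h)" by (simp add: power2_eq_square algebra_simps)
        show ?thesis by (simp only: den num)
      qed
      also have "\<dots> = (w-h) / (2* w)" using sh1 by simp
      finally show ?thesis .
    qed
    have ck: "2* w*cv*k = 1" unfolding k_def using spos cpos by simp
    have bb: "cnj \<beta> * \<beta> = of_real nb" using complex_norm_square[of \<beta>] unfolding nb_def by (metis mult.commute)
    define \<sigma> where "\<sigma> = \<beta> * of_real k"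
    define d where "d = (\<lambda>i::nat. if i = 0 then m + w else m - w)"
    define U where "U = mat2 (of_real cv) (- cnj \<sigma>) \<sigma> (of_real cv)"
    have ss: "cnj \<sigma> * \<sigma> = of_real (nb * k^2)" unfolding \<sigma>_def using bb
      by (simp add: power2_eq_square algebra_simps)
    have ss': "\<sigma> * cnj \<sigma> = of_real (nb * k^2)" using ss by (simp add: mult.commute)
    have r1: "cv^2 + nb*k^2 = 1" unfolding cv2 nbk using spos by (simp add: field_simps)
    have r2: "(m+w)*cv^2 + (m-w)*(nb*k^2) = \<alpha>" unfolding cv2 nbk m_def h_def using spos by (simp add: field_simps)
    have r3: "(m+w)*(nb*k^2) + (m-w)*cv^2 = \<delta>" unfolding cv2 nbk m_def h_def using spos by (simp add: field_simps)
    have "unitary_mat 2 U" unfolding unitary_mat_def U_def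
      apply (simp add: mat2_one ss ss' mat2_eq_iff)
      using r1 by (metis of_real_mult of_real_add of_real_1 power2_eq_square add.commute)
    moreover have "A = U * mat_diag 2 (\<lambda>i. complex_of_real (d i)) * mat_adjoint U"
    proof -
      have cs: "cnj \<sigma> = cnj \<beta> * of_real k" unfolding \<sigma>_def by simp
      have E1: "complex_of_real cv * (complex_of_real m + complex_of_real w) * complex_of_real cv +
        cnj \<sigma> * (complex_of_real m - complex_of_real w) * \<sigma> = of_real \<alpha>"
      proof -
        have "cnj \<sigma> * (of_real m - of_real w) * \<sigma> = of_real (m-w) * (cnj \<sigma> * \<sigma>)" by (simp add: algebra_simps)
        also have "\<dots> = of_real ((m-w)*(nb*k^2))" by (simp only: ss of_real_mult)
        finally have X: "cnj \<sigma> * (of_real m - of_real w) * \<sigma> = of_real ((m-w)*(nb*k^2))" .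
        have Y: "complex_of_real cv * (complex_of_real m + complex_of_real w) * complex_of_real cv = of_real (cv*(m+w)*cv)" by simp
        have Z: "cv*(m+w)*cv + (m-w)*(nb*k^2) = \<alpha>" using r2 by (simp add: power2_eq_square algebra_simps)
        show ?thesis unfolding X Y by (simp only: of_real_add[symmetric] Z)
      qed
      have E4: "\<sigma> * (complex_of_real m + complex_of_real w) * cnj \<sigma> +
        complex_of_real cv * (complex_of_real m - complex_of_real w) * complex_of_real cv = of_real \<delta>"
      proof -
        have "\<sigma> * (of_real m + of_real w) * cnj \<sigma> = of_real (m+w) * (cnj \<sigma> * \<sigma>)" by (simp add: algebra_simps)
        also have "\<dots> = of_real ((m+w)*(nb*k^2))" by (simp only: ss of_real_mult)
        finally have X: "\<sigma> * (of_real m + of_real w) * cnj \<sigma> = of_real ((m+w)*(nb*k^2))" .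
        have Y: "complex_of_real cv * (complex_of_real m - complex_of_real w) * complex_of_real cv = of_real (cv*(m-w)*cv)" by simp
        have Z: "(m+w)*(nb*k^2) + cv*(m-w)*cv = \<delta>" using r3 by (simp add: power2_eq_square algebra_simps)
        show ?thesis unfolding X Y by (simp only: of_real_add[symmetric] Z)
      qed
      have E2: "complex_of_real cv * (complex_of_real m + complex_of_real w) * cnj \<sigma> -
       cnj \<sigma> * (complex_of_real m - complex_of_real w) * complex_of_real cv = cnj \<beta>"
      proof -
        have "complex_of_real cv * (complex_of_real m + complex_of_real w) * cnj \<sigma> -
          cnj \<sigma> * (complex_of_real m - complex_of_real w) * complex_of_real cv = cnj \<beta> * of_real (2*w*cv*k)"
          unfolding cs by (simp add: algebra_simps)
        also have "\<dots> = cnj \<beta>" unfolding ck by simp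
        finally show ?thesis .
      qed
      have E3: "\<sigma> * (complex_of_real m + complex_of_real w) * complex_of_real cv -
       complex_of_real cv * (complex_of_real m - complex_of_real w) * \<sigma> = \<beta>"
      proof -
        have "\<sigma> * (complex_of_real m + complex_of_real w) * complex_of_real cv -
       complex_of_real cv * (complex_of_real m - complex_of_real w) * \<sigma> = \<beta> * of_real (2*w*cv*k)"
          unfolding \<sigma>_def by (simp add: algebra_simps)
        also have "\<dots> = \<beta>" unfolding ck by simp
        finally show ?thesis .
      qed
      show ?thesis unfolding AF U_def
        by (simp add: mat2_diag d_def E1 E2 E3 E4)
    qed
    ultimately show ?thesis by blast
  qed
qed

lemma herm_fun_props: assumes "hermitian_mat 2 A"
  shows "\<exists>d::nat\<Rightarrow>real. herm_fun 2 f A \<in> carrier_mat 2 2 \<and>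
     mtrace (A * herm_fun 2 f A) = of_real (d 0 * f (d 0) + d 1 * f (d 1)) \<and>
     mtrace A = of_real (d 0 + d 1) \<and> mtrace (A*A) = of_real (d 0 ^ 2 + d 1 ^ 2)"
proof -
  obtain U d where Ud: "unitary_mat 2 U" "A = U * mat_diag 2 (\<lambda>i. complex_of_real (d i)) * mat_adjoint U"
    using herm_diag_exists[OF assms] by blast
  let ?P = "\<lambda>B. \<exists>U d. unitary_mat 2 U \<and> A = U * mat_diag 2 (\<lambda>i. complex_of_real (d i)) * mat_adjoint U \<and>
       B = U * mat_diag 2 (\<lambda>i. complex_of_real (f (d i))) * mat_adjoint U"
  have "?P (U * mat_diag 2 (\<lambda>i. complex_of_real (f (d i))) * mat_adjoint U)" using Ud by blast
  hence "?P (herm_fun 2 f A)" unfolding herm_fun_def by (rule someI)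
  then obtain U' d' where U': "unitary_mat 2 U'"
    "A = U' * mat_diag 2 (\<lambda>i. complex_of_real (d' i)) * mat_adjoint U'"
    "herm_fun 2 f A = U' * mat_diag 2 (\<lambda>i. complex_of_real (f (d' i))) * mat_adjoint U'" by blast
  have Uc: "U' \<in> carrier_mat 2 2" using U'(1) unfolding unitary_mat_def by auto
  have "herm_fun 2 f A \<in> carrier_mat 2 2" unfolding U'(3) using Uc adj_carrier[OF Uc] by auto
  thus ?thesis using spec_traces[OF U'] by (intro exI[of _ d']) simp
qed

definition vec2 :: "complex \<Rightarrow> complex \<Rightarrow> complex vec" where
  "vec2 u v = vec 2 (\<lambda>i. if i = 0 then u else v)"

lemma vec2_carrier[simp]: "vec2 u v \<in> carrier_vec 2" by (simp add: vec2_def)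

lemma vec2_eta: "v \<in> carrier_vec 2 \<Longrightarrow> v = vec2 (v $ 0) (v $ 1)"
  by (rule eq_vecI) (auto simp: vec2_def less2)

lemma mat2_mult_vec2[simp]: "mat2 a b c d *\<^sub>v vec2 u v = vec2 (a*u + b * v) (c*u + d * v)"
  by (rule eq_vecI) (auto simp: vec2_def less2 mat2_def scalar_prod_def sum2 row_def)

lemma conj_vec2[simp]: "conjugate (vec2 u v) = vec2 (cnj u) (cnj v)"
  by (rule eq_vecI) (auto simp: vec2_def less2)

lemma vec2_sprod[simp]: "vec2 a b \<bullet> vec2 c d = a*c + b*d"
  by (simp add: vec2_def scalar_prod_def sum2)

lemma vec2_zero: "vec2 u v = 0\<^sub>v 2 \<longleftrightarrow> u = 0 \<and> v = 0"
proof
  assume "vec2 u v = 0\<^sub>v 2"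
  hence "vec2 u v $ 0 = 0" "vec2 u v $ 1 = 0" by auto
  thus "u = 0 \<and> v = 0" by (auto simp: vec2_def)
next
  assume "u = 0 \<and> v = 0" thus "vec2 u v = 0\<^sub>v 2" by (intro eq_vecI) (auto simp: vec2_def less2)
qed

lemma Xof_quad: "Re (conjugate (vec2 v0 v1) \<bullet> (Xof a x y z *\<^sub>v vec2 v0 v1)) =
   (a+z)*((Re v0)^2 + (Im v0)^2) + (a-z)*((Re v1)^2 + (Im v1)^2)
   + 2*((Re v0 * x - Im v0 * y)*Re v1 + (Re v0 * y + Im v0 * x)*Im v1)"
  unfolding Xof_def by (simp add: algebra_simps power2_eq_square)

lemma Xof_herm: "hermitian_mat 2 (Xof a x y z)"
  unfolding hermitian_mat_def Xof_def by simp

lemma Xof_posdef: assumes "a > 0" "x^2+y^2+z^2 < a^2" shows "posdef_mat 2 (Xof a x y z)"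
  unfolding posdef_mat_def
proof (intro conjI Xof_herm ballI impI)
  fix v :: "complex vec" assume v: "v \<in> carrier_vec 2" "v \<noteq> 0\<^sub>v 2"
  define v0 where "v0 = v $ 0"
  define v1 where "v1 = v $ 1"
  have ve: "v = vec2 v0 v1" unfolding v0_def v1_def by (rule vec2_eta[OF v(1)])
  have nz: "v0 \<noteq> 0 \<or> v1 \<noteq> 0" using v(2) unfolding ve vec2_zero by auto
  define p where "p = Re v0" define q where "q = Im v0" define u where "u = Re v1" define w where "w = Im v1"
  have nz': "p \<noteq> 0 \<or> q \<noteq> 0 \<or> u \<noteq> 0 \<or> w \<noteq> 0" using nz unfolding p_def q_def u_def w_def
    by (auto simp: complex_eq_iff)
  define Q where "Q = (a+z)*(p^2 + q^2) + (a-z)*(u^2+w^2) + 2*((p * x - q * y)*u + (p * y + q * x)*w)"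
  have A: "a + z > 0"
  proof -
    have "z^2 \<le> x^2+y^2+z^2" by simp
    hence "z^2 < a^2" using assms(2) by linarith
    hence "\<bar>z\<bar> < a" using power2_less_imp_less[of "\<bar>z\<bar>" a] assms(1) by simp
    thus ?thesis by simp
  qed
  have id: "(a+z)*Q = ((a+z)*p + x*u + y*w)^2 + ((a+z)*q + x*w - y*u)^2 + ((a+z)*(a-z) - x^2 - y^2)*(u^2+w^2)"
    unfolding Q_def by (simp add: algebra_simps power2_eq_square)
  have det: "(a+z)*(a-z) - x^2 - y^2 > 0" using assms(2) by (simp add: algebra_simps power2_eq_square)
  have "(a+z)*Q > 0"
  proof (cases "u = 0 \<and> w = 0")
    case True
    hence "p \<noteq> 0 \<or> q \<noteq> 0" using nz' by auto
    hence "((a+z)*p)^2 + ((a+z)*q)^2 > 0" using A by (auto simp: sum_power2_gt_zero_iff)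
    thus ?thesis unfolding id using True by simp
  next
    case False
    hence "u^2 + w^2 > 0" by (auto simp: sum_power2_gt_zero_iff)
    hence "((a+z)*(a-z) - x^2 - y^2)*(u^2+w^2) > 0" using det by simp
    thus ?thesis unfolding id using zero_le_power2[of "(a+z)*p + x*u + y*w"] zero_le_power2[of "(a+z)*q + x*w - y*u"] by linarith
  qed
  hence "Q > 0" using A by (simp add: zero_less_mult_iff)
  thus "0 < Re (conjugate v \<bullet> (Xof a x y z *\<^sub>v v))"
    unfolding ve Xof_quad Q_def p_def q_def u_def w_def .
qed

lemma posdef_Xof: assumes "posdef_mat 2 X"
  shows "\<exists>a x y z. X = Xof a x y z \<and> a > 0 \<and> x^2+y^2+z^2 < a^2"
proof -
  have H: "hermitian_mat 2 X" and P: "\<And>v. v \<in> carrier_vec 2 \<Longrightarrow> v \<noteq> 0\<^sub>v 2 \<Longrightarrow> Re (conjugate v \<bullet> (X *\<^sub>v v)) > 0"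
    using assms unfolding posdef_mat_def by auto
  define \<alpha> where "\<alpha> = Re (X$$(0,0))"
  define \<delta> where "\<delta> = Re (X$$(1,1))"
  define \<beta> where "\<beta> = X$$(1,0)"
  have XF: "X = mat2 (of_real \<alpha>) (cnj \<beta>) \<beta> (of_real \<delta>)"
    unfolding \<alpha>_def \<beta>_def \<delta>_def by (rule herm_form[OF H])
  define a where "a = (\<alpha>+\<delta>)/2"
  define z where "z = (\<alpha>-\<delta>)/2"
  define x where "x = Re \<beta>"
  define y where "y = Im \<beta>"
  have XX: "X = Xof a x y z" unfolding XF Xof_def a_def z_def x_def y_def
    by (simp add: mat2_eq_iff complex_eq_iff field_simps)
  have "Re (conjugate (vec2 1 0) \<bullet> (X *\<^sub>v vec2 1 0)) > 0" by (rule P) (auto simp: vec2_zero)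
  hence pa: "a + z > 0" unfolding XX Xof_quad by simp
  have "Re (conjugate (vec2 0 1) \<bullet> (X *\<^sub>v vec2 0 1)) > 0" by (rule P) (auto simp: vec2_zero)
  hence pd: "a - z > 0" unfolding XX Xof_quad by simp
  have "Re (conjugate (vec2 (of_real (a-z)) (-(of_real x + \<i> * of_real y))) \<bullet> (X *\<^sub>v vec2 (of_real (a-z)) (-(of_real x + \<i> * of_real y)))) > 0"
    by (rule P) (use pd in \<open>auto simp: vec2_zero\<close>)
  hence "(a-z)*((a+z)*(a-z) - x^2 - y^2) > 0" unfolding XX Xof_quad by (simp add: algebra_simps power2_eq_square)
  hence "(a+z)*(a-z) - x^2 - y^2 > 0" using pd by (simp add: zero_less_mult_iff)
  hence "x^2+y^2+z^2 < a^2" by (simp add: algebra_simps power2_eq_square)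
  moreover have "a > 0" using pa pd by simp
  ultimately show ?thesis using XX by blast
qed

lemma Xof_sq: "Xof a x y z * Xof a x y z = Xof (a^2+x^2+y^2+z^2) (2*a*x) (2*a*y) (2*a*z)"
  unfolding Xof_def by (simp add: mat2_eq_iff complex_eq_iff power2_eq_square algebra_simps)

lemma Xof_trace: "mtrace (Xof a x y z) = of_real (2*a)"
  unfolding Xof_def by simp

lemma Xof_smult: "(1 / complex_of_real c) \<cdot>\<^sub>m Xof a x y z = Xof (a/c) (x/c) (y/c) (z/c)"
  unfolding Xof_def by (simp add: mat2_eq_iff complex_eq_iff algebra_simps diff_divide_distrib add_divide_distrib)

lemma Xof_smult2: "complex_of_real c \<cdot>\<^sub>m Xof a x y z = Xof (c*a) (c*x) (c*y) (c*z)"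
  unfolding Xof_def by (simp add: mat2_eq_iff complex_eq_iff algebra_simps)

lemma tr_lin1: assumes "P \<in> carrier_mat 2 2" "M \<in> carrier_mat 2 2"
  shows "mtrace (P * (M + k \<cdot>\<^sub>m 1\<^sub>m 2)) = mtrace (P*M) + k * mtrace P"
  by (subst (1 2 3) mat2_eta[OF assms(1)], subst (1 2) mat2_eta[OF assms(2)]) (simp add: mat2_one algebra_simps)

lemma tr_lin2: assumes "P \<in> carrier_mat 2 2" "M \<in> carrier_mat 2 2"
  shows "mtrace ((k \<cdot>\<^sub>m P) * M) = k * mtrace (P*M)"
  by (subst (1 2) mat2_eta[OF assms(1)], subst (1 2) mat2_eta[OF assms(2)]) (simp add: algebra_simps)

lemma two_point:
  fixes d0 d1 q :: real
  assumes "d0 + d1 = 1" "d0^2 + d1^2 = q^2 + (1-q)^2"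
  shows "(d0 = q \<and> d1 = 1-q) \<or> (d0 = 1-q \<and> d1 = q)"
proof -
  have d1: "d1 = 1 - d0" using assms(1) by simp
  have "(d0 - q) * (d0 - (1-q)) = 0" using assms(2) unfolding d1 by (simp add: algebra_simps power2_eq_square)
  thus ?thesis using d1 by auto
qed

lemma ent2_Xof: assumes a: "a > 0" and r: "x^2+y^2+z^2 < a^2"
  defines "r \<equiv> sqrt (x^2+y^2+z^2)"
  defines "s \<equiv> a^2 + r^2"
  defines "q \<equiv> (a+r)^2 / (2* s)"
  shows "ent2 (Xof a x y z) = s/2 * (q * ln (2*q) + (1-q) * ln (2*(1-q)))"
proof -
  have r2: "r^2 = x^2+y^2+z^2" unfolding r_def by simp
  have r0: "r \<ge> 0" unfolding r_def by simp
  have ra: "r < a" using r a unfolding r_def by (metis real_sqrt_less_iff real_sqrt_abs abs_of_pos power2_eq_square real_sqrt_mult_self)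
  have spos: "s > 0" unfolding s_def using a by (simp add: add_pos_nonneg)
  define X where "X = Xof a x y z"
  have XX: "X * X = Xof s (2*a*x) (2*a*y) (2*a*z)" unfolding X_def Xof_sq s_def r2 by (simp add: add.assoc)
  have trXX: "mtrace (X*X) = of_real (2* s)" unfolding XX Xof_trace ..
  define Aa where "Aa = (1 / mtrace (X * X)) \<cdot>\<^sub>m (X * X)"
  have Aa: "Aa = Xof (1/2) (a*x/s) (a*y/s) (a*z/s)"
    unfolding Aa_def trXX unfolding XX Xof_smult using spos by simp
  have AaH: "hermitian_mat 2 Aa" unfolding Aa by (rule Xof_herm)
  obtain d :: "nat \<Rightarrow> real" where d: "herm_fun 2 ln Aa \<in> carrier_mat 2 2"
     "mtrace (Aa * herm_fun 2 ln Aa) = of_real (d 0 * ln (d 0) + d 1 * ln (d 1))"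
     "mtrace Aa = of_real (d 0 + d 1)" "mtrace (Aa*Aa) = of_real (d 0 ^ 2 + d 1 ^ 2)"
    using herm_fun_props[OF AaH, of ln] by blast
  have "complex_of_real (2*(1/2)) = complex_of_real (d 0 + d 1)" using d(3) unfolding Aa Xof_trace .
  hence "2*(1/2) = d 0 + d 1" by (simp only: of_real_eq_iff)
  hence s1: "d 0 + d 1 = 1" by simp
  have "mtrace (Aa*Aa) = of_real (2*((1/2)^2 + (a*x/s)^2 + (a*y/s)^2 + (a*z/s)^2))"
    unfolding Aa Xof_sq Xof_trace by simp
  hence "complex_of_real (d 0 ^ 2 + d 1 ^ 2) = of_real (2*((1/2)^2 + (a*x/s)^2 + (a*y/s)^2 + (a*z/s)^2))" using d(4) by simp
  hence s2: "d 0 ^ 2 + d 1 ^ 2 = 2*((1/2)^2 + (a*x/s)^2 + (a*y/s)^2 + (a*z/s)^2)" by (simp only: of_real_eq_iff)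
  have q1: "1 - q = (a-r)^2/(2* s)" unfolding q_def s_def using spos unfolding s_def
    by (simp add: field_simps power2_eq_square)
  have "2*((1/2)^2 + (a*x/s)^2 + (a*y/s)^2 + (a*z/s)^2) = q^2 + (1-q)^2"
  proof -
    have L: "2*((1/2)^2 + (a*x/s)^2 + (a*y/s)^2 + (a*z/s)^2) = (s^2 + 4*a^2*r^2)/(2* s^2)"
      unfolding r2 using spos by (simp add: field_simps power2_eq_square)
    have R: "q^2 + (1-q)^2 = (((a+r)^2)^2 + ((a-r)^2)^2)/(4* s^2)"
      unfolding q1 unfolding q_def using spos by (simp add: power_divide power_mult_distrib add_divide_distrib)
    have E: "((a+r)^2)^2 + ((a-r)^2)^2 = 2* s^2 + 8*a^2*r^2" unfolding s_def power2_eq_square by (simp add: algebra_simps)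
    show ?thesis unfolding L R E using spos by (simp add: field_simps power2_eq_square)
  qed
  hence dd: "(d 0 = q \<and> d 1 = 1-q) \<or> (d 0 = 1-q \<and> d 1 = q)" using two_point[OF s1] s2 by simp
  hence ent: "d 0 * ln (d 0) + d 1 * ln (d 1) = q * ln q + (1-q) * ln (1-q)" by auto
  have XXc: "X * X \<in> carrier_mat 2 2" unfolding XX Xof_def by simp
  have AaC: "Aa \<in> carrier_mat 2 2" unfolding Aa Xof_def by simp
  have MLc: "mat_log 2 Aa \<in> carrier_mat 2 2" unfolding mat_log_def by (rule d(1))
  have XXA: "X * X = complex_of_real (2* s) \<cdot>\<^sub>m Aa" unfolding Aa Xof_smult2 XX using spos by (simp add: mult.assoc)
  have T1: "mtrace (X * X * (mat_log 2 Aa + complex_of_real (ln 2) \<cdot>\<^sub>m 1\<^sub>m 2))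
     = mtrace (X*X * mat_log 2 Aa) + of_real (ln 2) * mtrace (X*X)" by (rule tr_lin1[OF XXc MLc])
  have T2: "mtrace (X*X * mat_log 2 Aa) = of_real (2* s) * mtrace (Aa * mat_log 2 Aa)"
    unfolding XXA by (rule tr_lin2[OF AaC MLc])
  have T3: "mtrace (Aa * mat_log 2 Aa) = of_real (q * ln q + (1-q) * ln (1-q))"
    unfolding mat_log_def d(2) ent by (rule refl)
  have T: "mtrace (X * X * (mat_log 2 Aa + complex_of_real (ln 2) \<cdot>\<^sub>m 1\<^sub>m 2))
     = of_real (2* s * (q * ln q + (1-q) * ln (1-q)) + ln 2 * (2 * s))"
    unfolding T1 T2 T3 trXX by simp
  have qpos: "q > 0" unfolding q_def using spos ra r0 by simp
  have q1pos: "1 - q > 0" unfolding q1 using spos ra by simp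
  have "ent2 X = 1/4 * (2* s * (q * ln q + (1-q) * ln (1-q)) + ln 2 * (2 * s))"
    unfolding ent2_def Aa_def[symmetric] T Re_complex_of_real ..
  also have "\<dots> = s/2 * (q * ln (2*q) + (1-q) * ln (2*(1-q)))"
  proof -
    have l1: "ln (2*q) = ln 2 + ln q" using qpos by (simp add: ln_mult)
    have l2: "ln (2*(1-q)) = ln 2 + ln (1-q)" using q1pos ln_mult[of 2 "1-q"] by simp
    show ?thesis unfolding l1 l2 by (simp add: algebra_simps)
  qed
  finally show ?thesis unfolding X_def .
qed

definition gfun :: "real \<Rightarrow> real" where
 "gfun t = t^2 - 1/2*((1+t)^2*ln(1+t) + (1-t)^2*ln(1-t)) + 1/2*(1+t^2)*ln(1+t^2)"
definition gd :: "real \<Rightarrow> real" where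
 "gd x = 2*x - (1+x)*ln(1+x) + (1-x)*ln(1-x) + x*ln(1+x^2)"
definition gdd :: "real \<Rightarrow> real" where
 "gdd x = ln(1+x^2) - ln(1+x) - ln(1-x) + 2*x^2/(1+x^2)"

lemma gfun_deriv: assumes "0 \<le> x" "x < 1" shows "(gfun has_real_derivative gd x) (at x)"
proof -
  have p: "0 < 1+x^2" "0<1+x" "0<1-x" using assms by (auto simp: add_pos_nonneg)
  show ?thesis unfolding gfun_def[abs_def] gd_def
    apply (rule derivative_eq_intros refl | use p in force)+
    using p apply simp
  proof -
    have q: "(1+x)^2/(1+x) = 1+x" "(1-x)^2/(1-x) = 1-x" using p by (simp_all add: power2_eq_square)
    show "x - ((2 + 2 * x) * ln (1 + x) + (1 + x)\<^sup>2 / (1 + x) +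
         ((2 * x - 2) * ln (1 - x) - (1 - x)\<^sup>2 / (1 - x))) / 2 =
        (1 - x) * ln (1 - x) - (1 + x) * ln (1 + x)" unfolding q by (simp add: field_simps)
  qed
qed

lemma gd_deriv: assumes "0 \<le> x" "x < 1" shows "(gd has_real_derivative gdd x) (at x)"
proof -
  have p: "0 < 1+x^2" "0<1+x" "0<1-x" using assms by (auto simp: add_pos_nonneg)
  show ?thesis unfolding gd_def[abs_def] gdd_def
    apply (rule derivative_eq_intros refl | use p in force)+
    using p by (simp add: field_simps power2_eq_square)
qed

lemma gdd_nonneg: assumes "0 \<le> x" "x < 1" shows "gdd x \<ge> 0"
proof -
  have "ln(1+x) + ln(1-x) = ln((1+x)*(1-x))" using assms by (simp add: ln_mult)
  also have "\<dots> \<le> 0"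
  proof -
    have "x*x \<le> x*1" using assms by (intro mult_left_mono) auto
    hence "0 < (1+x)*(1-x)" "(1+x)*(1-x) \<le> 1" using assms by (auto simp: algebra_simps)
    thus ?thesis by simp
  qed
  finally have a: "ln(1+x) + ln(1-x) \<le> 0" .
  have b: "ln(1+x^2) \<ge> 0" by simp
  have c: "2*x^2/(1+x^2) \<ge> 0" by simp
  show ?thesis unfolding gdd_def using a b c by linarith
qed

lemma gd_nonneg: assumes "0 \<le> t" "t < 1" shows "gd t \<ge> 0"
proof -
  have "gd 0 \<le> gd t"
    by (rule DERIV_nonneg_imp_nondecreasing[OF assms(1)]) (use assms gd_deriv gdd_nonneg in force)
  thus ?thesis by (simp add: gd_def)
qed

lemma gfun_nonneg: assumes "0 \<le> t" "t < 1" shows "gfun t \<ge> 0"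
proof -
  have "gfun 0 \<le> gfun t"
    by (rule DERIV_nonneg_imp_nondecreasing[OF assms(1)]) (use assms gfun_deriv gd_nonneg in force)
  thus ?thesis by (simp add: gfun_def)
qed

definition entfun :: "real \<Rightarrow> real" where
 "entfun t = 1/2*((1+t)^2*ln(1+t) + (1-t)^2*ln(1-t)) - 1/2*(1+t^2)*ln(1+t^2)"

lemma ent_entfun: assumes a: "a > 0" and r: "x^2+y^2+z^2 < a^2"
  shows "ent2 (Xof a x y z) = a^2 * entfun (sqrt (x^2+y^2+z^2) / a)"
proof -
  define r where "r = sqrt (x^2+y^2+z^2)"
  define s where "s = a^2 + r^2"
  define q where "q = (a+r)^2 / (2 * s)"
  define t where "t = r / a"
  have r0: "r \<ge> 0" unfolding r_def by simp
  have ra: "r < a" using r a unfolding r_def by (metis real_sqrt_less_iff real_sqrt_abs abs_of_pos power2_eq_square real_sqrt_mult_self)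
  have rt: "r = a * t" unfolding t_def using a by simp
  have t0: "t \<ge> 0" "t < 1" unfolding t_def using r0 ra a by auto
  have sa: "s = a^2 * (1+t^2)" unfolding s_def rt by (simp add: algebra_simps power2_eq_square)
  have E: "ent2 (Xof a x y z) = s/2 * (q * ln (2*q) + (1-q) * ln (2*(1-q)))"
    unfolding s_def q_def r_def by (rule ent2_Xof[OF a r])
  have tp: "1 + t^2 > 0" by (simp add: add_pos_nonneg)
  have n1: "(a+r)^2 = a^2*(1+t)^2" unfolding rt by (simp add: power2_eq_square algebra_simps)
  have "2*q = 2*(a^2*(1+t)^2) / (2*(a^2*(1+t^2)))" unfolding q_def n1 sa by (simp only: times_divide_eq_right)
  also have "\<dots> = ((2*a^2)*(1+t)^2)/((2*a^2)*(1+t^2))" by (simp only: mult.assoc)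
  also have "\<dots> = (1+t)^2/(1+t^2)" using a by (intro mult_divide_mult_cancel_left) simp
  finally have q2: "2*q = (1+t)^2/(1+t^2)" .
  have "2*(1-q) = 2 - 2*q" by simp
  also have "\<dots> = (1-t)^2/(1+t^2)" unfolding q2 using tp by (simp add: field_simps power2_eq_square)
  finally have q3: "2*(1-q) = (1-t)^2/(1+t^2)" .
  have L1: "ln ((1+t)^2/(1+t^2)) = 2*ln(1+t) - ln(1+t^2)" using t0 tp by (simp add: ln_div ln_realpow)
  have L2: "ln ((1-t)^2/(1+t^2)) = 2*ln(1-t) - ln(1+t^2)" using t0 tp by (simp add: ln_div ln_realpow)
  have "s/2 * (q * ln (2*q) + (1-q) * ln (2*(1-q))) = s/4 * ((2*q) * ln (2*q) + (2*(1-q)) * ln (2*(1-q)))"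
    by (simp add: algebra_simps)
  also have "\<dots> = a^2/4 * ((1+t)^2 * ln ((1+t)^2/(1+t^2)) + (1-t)^2 * ln ((1-t)^2/(1+t^2)))"
  proof -
    have key: "\<And>P X Y A B. P \<noteq> 0 \<Longrightarrow> a^2*P/4 * (X/P*A + Y/P*B) = a^2/4*(X*A + Y*B)"
      by (simp add: field_simps)
    show ?thesis unfolding q2 q3 sa by (rule key) (use tp in simp)
  qed
  also have "\<dots> = a^2 * entfun t" unfolding L1 L2 entfun_def by (simp add: algebra_simps power2_eq_square)
  finally show ?thesis unfolding E t_def r_def .
qed

lemma gibbs: fixes q :: real assumes "0 < q" "q < 1"
  shows "q * ln (2*q) + (1-q) * ln (2*(1-q)) \<ge> 0"
proof -
  have g: "p * ln (2*p) \<ge> p - 1/2" if "p > 0" for p :: real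
  proof -
    have "ln (1/(2*p)) \<le> 1/(2*p) - 1" using that by (intro ln_le_minus_one) simp
    hence "- ln (2*p) \<le> 1/(2*p) - 1" using that by (simp add: ln_div)
    hence "p * (- ln (2*p)) \<le> p * (1/(2*p) - 1)" using that by (intro mult_left_mono) auto
    thus ?thesis using that by (simp add: algebra_simps)
  qed
  show ?thesis using g[of q] g[of "1-q"] assms by linarith
qed

lemma ent_bounds: assumes a: "a > 0" and r: "x^2+y^2+z^2 < a^2"
  shows "0 \<le> ent2 (Xof a x y z)" "ent2 (Xof a x y z) \<le> x^2+y^2+z^2"
proof -
  define r where "r = sqrt (x^2+y^2+z^2)"
  define s where "s = a^2 + r^2"
  define q where "q = (a+r)^2 / (2 * s)"
  have r0: "r \<ge> 0" unfolding r_def by simp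
  have ra: "r < a" using r a unfolding r_def by (metis real_sqrt_less_iff real_sqrt_abs abs_of_pos power2_eq_square real_sqrt_mult_self)
  have r2: "r^2 = x^2+y^2+z^2" unfolding r_def by simp
  have spos: "s > 0" unfolding s_def using a by (simp add: add_pos_nonneg)
  have E: "ent2 (Xof a x y z) = s/2 * (q * ln (2*q) + (1-q) * ln (2*(1-q)))"
    unfolding s_def q_def r_def by (rule ent2_Xof[OF a r])
  have qpos: "q > 0" unfolding q_def using spos ra r0 by simp
  have q1: "1 - q = (a-r)^2/(2 * s)" unfolding q_def s_def using spos unfolding s_def
    by (simp add: field_simps power2_eq_square)
  have q1pos: "1 - q > 0" unfolding q1 using spos ra by simp
  show "0 \<le> ent2 (Xof a x y z)" unfolding E using gibbs[of q] qpos q1pos spos by simp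
  define t where "t = r / a"
  have t0: "0 \<le> t" "t < 1" unfolding t_def using r0 ra a by auto
  have "gfun t \<ge> 0" by (rule gfun_nonneg[OF t0])
  hence "entfun t \<le> t^2" unfolding gfun_def entfun_def by simp
  hence "a^2 * entfun t \<le> a^2 * t^2" by (simp add: mult_left_mono)
  also have "a^2 * t^2 = x^2+y^2+z^2" unfolding t_def using a r2 by (simp add: power_divide)
  finally show "ent2 (Xof a x y z) \<le> x^2+y^2+z^2" unfolding ent_entfun[OF a r] t_def r_def .
qed

lemma entfun_lim: "((\<lambda>t. t^2 / entfun t) \<longlongrightarrow> 1) (at_right 0)"
  unfolding entfun_def by real_asymp

theorem mainTheorem17:
  fixes p1 p2 p3 :: real
  assumes "p1 \<ge> 0" "p2 \<ge> 0" "p3 \<ge> 0" "p1 + p2 + p3 \<le> 1"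
  shows "alpha2 (pauli_generator p1 p2 p3) = 2 * min (p1 + p2) (min (p2 + p3) (p3 + p1))"
proof -
  define m where "m = min (p1 + p2) (min (p2 + p3) (p3 + p1))"
  define L where "L = pauli_generator p1 p2 p3"
  define S where "S = {dirichlet2 L X / ent2 X | X. posdef_mat 2 X \<and> ent2 X \<noteq> 0}"
  have m0: "m \<ge> 0" using assms by (simp add: m_def)
  have lower: "2*m \<le> v" if vS: "v \<in> S" for v
  proof -
    obtain X where X: "v = dirichlet2 L X / ent2 X" "posdef_mat 2 X" "ent2 X \<noteq> 0" using vS[unfolded S_def] by blast
    obtain a x y z where X': "X = Xof a x y z" "a>0" "x^2+y^2+z^2 < a^2" using posdef_Xof[OF X(2)] by blast
    have D: "dirichlet2 L X = 2*((p2+p3)*x^2 + (p1+p3)*y^2 + (p1+p2)*z^2)" unfolding L_def X'(1) by (rule dirichlet_Xof)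
    have Q: "(p2+p3)*x^2 + (p1+p3)*y^2 + (p1+p2)*z^2 \<ge> m*(x^2+y^2+z^2)"
    proof -
      have "m*x^2 \<le> (p2+p3)*x^2" by (intro mult_right_mono) (auto simp: m_def)
      moreover have "m*y^2 \<le> (p1+p3)*y^2" by (intro mult_right_mono) (auto simp: m_def)
      moreover have "m*z^2 \<le> (p1+p2)*z^2" by (intro mult_right_mono) (auto simp: m_def)
      ultimately show ?thesis by (simp add: algebra_simps)
    qed
    have E: "0 \<le> ent2 X" "ent2 X \<le> x^2+y^2+z^2" unfolding X'(1) using ent_bounds[OF X'(2,3)] by auto
    have Ep: "ent2 X > 0" using E(1) X(3) by simp
    have "m * ent2 X \<le> m * (x^2+y^2+z^2)" using E(2) m0 by (rule mult_left_mono)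
    hence "2*m * ent2 X \<le> dirichlet2 L X" unfolding D using Q by simp
    thus ?thesis unfolding X(1) using Ep by (simp add: pos_le_divide_eq)
  qed
  have bdd: "bdd_below S" using lower by (auto simp: bdd_below_def)
  have up: "Inf S \<le> 2*c \<and> S \<noteq> {}"
    if W: "\<And>t. 0<t \<Longrightarrow> t<1 \<Longrightarrow> posdef_mat 2 (W t) \<and> dirichlet2 L (W t) = 2*c*t^2 \<and> ent2 (W t) = entfun t"
    for c W
  proof -
    have ev1: "\<forall>\<^sub>F t in at_right 0. t^2/entfun t > 1/2" by (rule order_tendstoD(1)[OF entfun_lim]) simp
    have ev2: "\<forall>\<^sub>F t in at_right (0::real). t \<in> {0<..<1}" by (rule eventually_at_right_real) simp
    have ev: "\<forall>\<^sub>F t in at_right 0. 2*c*(t^2/entfun t) \<in> S"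
      using ev1 ev2
    proof eventually_elim
      case (elim t)
      have ne: "entfun t \<noteq> 0" using elim(1) by auto
      have Wt: "posdef_mat 2 (W t)" "dirichlet2 L (W t) = 2*c*t^2" "ent2 (W t) = entfun t" using W[of t] elim(2) by auto
      have e: "2*c*(t^2/entfun t) = dirichlet2 L (W t) / ent2 (W t)" unfolding Wt(2,3) by simp
      show ?case unfolding S_def e using Wt(1) ne Wt(3) by (intro CollectI exI[of _ "W t"]) simp
    qed
    have lim2: "((\<lambda>t. 2*c*(t^2/entfun t)) \<longlongrightarrow> 2*c) (at_right 0)"
      using tendsto_mult[OF tendsto_const entfun_lim, of "2*c"] by simp
    have "Inf S \<le> 2*c"
      by (rule tendsto_lowerbound[OF lim2]) (use ev bdd in \<open>auto elim: eventually_mono intro: cInf_lower\<close>)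
    moreover have "S \<noteq> {}" using eventually_happens[OF ev] by auto
    ultimately show ?thesis by blast
  qed
  have W1: "Inf S \<le> 2*(p2+p3) \<and> S \<noteq> {}"
  proof (rule up)
    fix t :: real assume t: "0 < t" "t < 1"
    have r: "t^2 + 0^2 + 0^2 < 1^2" using t by (simp add: power_less_one_iff abs_less_iff)
    show "posdef_mat 2 (Xof 1 t 0 0) \<and> dirichlet2 L (Xof 1 t 0 0) = 2*(p2+p3)*t^2 \<and> ent2 (Xof 1 t 0 0) = entfun t"
      using Xof_posdef[OF _ r] ent_entfun[OF _ r] dirichlet_Xof t unfolding L_def by simp
  qed
  have W2: "Inf S \<le> 2*(p1+p3)"
  proof (rule up[THEN conjunct1])
    fix t :: real assume t: "0 < t" "t < 1"
    have r: "0^2 + t^2 + 0^2 < 1^2" using t by (simp add: power_less_one_iff abs_less_iff)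
    show "posdef_mat 2 (Xof 1 0 t 0) \<and> dirichlet2 L (Xof 1 0 t 0) = 2*(p1+p3)*t^2 \<and> ent2 (Xof 1 0 t 0) = entfun t"
      using Xof_posdef[OF _ r] ent_entfun[OF _ r] dirichlet_Xof t unfolding L_def by simp
  qed
  have W3: "Inf S \<le> 2*(p1+p2)"
  proof (rule up[THEN conjunct1])
    fix t :: real assume t: "0 < t" "t < 1"
    have r: "0^2 + 0^2 + t^2 < 1^2" using t by (simp add: power_less_one_iff abs_less_iff)
    show "posdef_mat 2 (Xof 1 0 0 t) \<and> dirichlet2 L (Xof 1 0 0 t) = 2*(p1+p2)*t^2 \<and> ent2 (Xof 1 0 0 t) = entfun t"
      using Xof_posdef[OF _ r] ent_entfun[OF _ r] dirichlet_Xof t unfolding L_def by simp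
  qed
  have "2*m \<le> Inf S" using W1 lower by (intro cInf_greatest) auto
  moreover have "Inf S \<le> 2*m" using W1 W2 W3 unfolding m_def by (auto simp: min_def)
  ultimately have "Inf S = 2*m" by simp
  thus ?thesis unfolding alpha2_def S_def L_def m_def .
qed

end
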